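(* Let $d\ge2$, $s\ge1$, $n:=ds$, let $U\in\mathcal U(n)$ be Haar-distributed and $B:=\phi_{d,s}(U)$. Then for all $i\ne i'$ and $j\ne j'$ in $\{1,\dots,d\}$: $$\operatorname{Var}(B_{ij})=\frac{(d-1)^2}{d^2(n^2-1)},\qquad \operatorname{Cov}(B_{ij},B_{i'j})=\operatorname{Cov}(B_{ij},B_{ij'})=-\frac{d-1}{d^2(n^2-1)},$$ $$\rho(B_{ij},B_{i'j})=\rho(B_{ij},B_{ij'})=-\frac{1}{d-1},\qquad \operatorname{Cov}(B_{ij},B_{i'j'})=\frac{1}{d^2(n^2-1)},\qquad \rho(B_{ij},B_{i'j'})=\frac{1}{(d-1)^2}.$$
   Context: $\mathcal U(n)$ is the group of $n\times n$ complex unitary matrices with its normalized Haar probability measure. For $U\in\mathcal U(ds)$ viewed as a $d\times d$ block matrix with blocks $U_{ij}\in M_s(\mathbb C)$, $\phi_{d,s}(U)=\big(\tfrac1s\|U_{ij}\|_F^2\big)_{i,j=1}^d$, where $\|X\|_F=\operatorname{Tr}(XX^* )^{1/2}$. $\rho(X,Y)=\operatorname{Cov}(X,Y)/\sqrt{\operatorname{Var}(X)\operatorname{Var}(Y)}$ is Pearson's correlation coefficient. *)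

theory Defs
  imports "HOL-Probability.Probability"
begin

text \<open>Complex square matrices indexed by a finite type 'n (n = CARD('n)).
  For the block structure we take 'n = 'd \<times> 's, so that row index (i,a)
  means block row i, row a inside the block.\<close>

definition conj_transpose :: "complex ^'n ^'n \<Rightarrow> complex ^'n ^'n" where
  "conj_transpose U = (\<chi> i j. cnj (U $ j $ i))"

definition unitary_mat :: "complex ^'n ^'n \<Rightarrow> bool" where
  "unitary_mat U \<longleftrightarrow> conj_transpose U ** U = mat 1 \<and> U ** conj_transpose U = mat 1"

definition haar_unitary :: "(complex ^'n ^'n) measure \<Rightarrow> bool" where
  "haar_unitary M \<longleftrightarrow> prob_space M \<and> sets M = sets borel \<and>
     (AE U in M. unitary_mat U) \<and>
     (\<forall>V. unitary_mat V \<longrightarrow> distr M borel (\<lambda>U. V ** U) = M)"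

definition phi_block :: "complex ^('d::finite \<times> 's::finite) ^('d \<times> 's) \<Rightarrow> 'd \<Rightarrow> 'd \<Rightarrow> real" where
  "phi_block U i j = (1 / real CARD('s)) *
     (\<Sum>a\<in>UNIV. \<Sum>b\<in>UNIV. (cmod (U $ (i, a) $ (j, b)))\<^sup>2)"

definition covariance :: "'a measure \<Rightarrow> ('a \<Rightarrow> real) \<Rightarrow> ('a \<Rightarrow> real) \<Rightarrow> real" where
  "covariance M X Y = (\<integral>x. (X x - (\<integral>y. X y \<partial>M)) * (Y x - (\<integral>y. Y y \<partial>M)) \<partial>M)"

definition variance :: "'a measure \<Rightarrow> ('a \<Rightarrow> real) \<Rightarrow> real" where
  "variance M X = covariance M X X"

definition pearson :: "'a measure \<Rightarrow> ('a \<Rightarrow> real) \<Rightarrow> ('a \<Rightarrow> real) \<Rightarrow> real" where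
  "pearson M X Y = covariance M X Y / sqrt (variance M X * variance M Y)"

end

theory Submission
  imports Defs
begin

lemma haar_prob: "haar_unitary M \<Longrightarrow> prob_space M"
  by (simp add: haar_unitary_def)
lemma haar_sets: "haar_unitary M \<Longrightarrow> sets M = sets borel"
  by (simp add: haar_unitary_def)
lemma haar_AE: "haar_unitary M \<Longrightarrow> AE U in M. unitary_mat U"
  by (simp add: haar_unitary_def)

lemma unitary_col_norm:
  fixes U :: "complex^'n^'n"
  assumes "unitary_mat U"
  shows "(\<Sum>k\<in>UNIV. (cmod (U$k$c))^2) = 1"
proof -
  have "(conj_transpose U ** U) $ c $ c = 1" using assms by (simp add: unitary_mat_def mat_def)
  hence "(\<Sum>k\<in>UNIV. cnj (U$k$c) * U$k$c) = 1" by (simp add: matrix_matrix_mult_def conj_transpose_def)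
  moreover have "complex_of_real (\<Sum>k\<in>UNIV. (cmod (U$k$c))^2) = (\<Sum>k\<in>UNIV. cnj (U$k$c) * U$k$c)"
    by (simp only: of_real_sum complex_norm_square mult.commute)
  ultimately have "complex_of_real (\<Sum>k\<in>UNIV. (cmod (U$k$c))^2) = 1" by simp
  thus ?thesis by (metis of_real_eq_1_iff)
qed

lemma unitary_col_orth:
  fixes U :: "complex^'n^'n"
  assumes "unitary_mat U" "c \<noteq> d"
  shows "(\<Sum>k\<in>UNIV. U$k$c * cnj (U$k$d)) = 0"
proof -
  have "(conj_transpose U ** U) $ d $ c = 0" using assms by (simp add: unitary_mat_def mat_def)
  hence "(\<Sum>k\<in>UNIV. cnj (U$k$d) * U$k$c) = 0" by (simp add: matrix_matrix_mult_def conj_transpose_def)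
  thus ?thesis by (simp add: mult.commute)
qed

lemma unitary_entry_le:
  fixes U :: "complex^'n^'n"
  assumes "unitary_mat U"
  shows "cmod (U$a$c) \<le> 1"
proof -
  have "(cmod (U$a$c))^2 \<le> (\<Sum>k\<in>UNIV. (cmod (U$k$c))^2)"
    by (rule member_le_sum) auto
  hence "(cmod (U$a$c))^2 \<le> 1" using unitary_col_norm[OF assms] by simp
  thus ?thesis by (simp add: power_le_one_iff abs_le_square_iff)
qed

lemma mult_cont: "continuous_on UNIV (\<lambda>U::complex^'n^'n. V ** U)"
  unfolding matrix_matrix_mult_def by (intro continuous_intros)

lemma haar_meas:
  assumes h: "haar_unitary M" and f: "continuous_on UNIV f"
  shows "f \<in> borel_measurable M"
  unfolding measurable_cong_sets[OF haar_sets[OF h] refl] by (rule borel_measurable_continuous_onI[OF f])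

lemma haar_inv:
  fixes f :: "complex^'n^'n \<Rightarrow> real"
  assumes h: "haar_unitary M" and V: "unitary_mat V" and f: "continuous_on UNIV f"
  shows "(\<integral>U. f (V ** U) \<partial>M) = (\<integral>U. f U \<partial>M)"
    and "integrable M f \<Longrightarrow> integrable M (\<lambda>U. f (V ** U))"
proof -
  have d: "distr M borel (\<lambda>U. V ** U) = M" using h V by (simp add: haar_unitary_def)
  have m: "(\<lambda>U. V ** U) \<in> measurable M borel"
    by (rule haar_meas[OF h mult_cont])
  have fm: "f \<in> borel_measurable borel" using f by (rule borel_measurable_continuous_onI)
  have "(\<integral>U. f U \<partial>M) = (\<integral>U. f U \<partial>distr M borel (\<lambda>U. V ** U))" by (simp add: d)
  also have "... = (\<integral>U. f (V ** U) \<partial>M)" by (rule integral_distr[OF m fm])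
  finally show "(\<integral>U. f (V ** U) \<partial>M) = (\<integral>U. f U \<partial>M)" by simp
  assume "integrable M f"
  hence "integrable (distr M borel (\<lambda>U. V ** U)) f" by (simp add: d)
  thus "integrable M (\<lambda>U. f (V ** U))" using integrable_distr_eq[OF m fm] by simp
qed

lemma haar_integrable:
  fixes f :: "complex^'n^'n \<Rightarrow> real"
  assumes h: "haar_unitary M" and f: "continuous_on UNIV f"
    and b: "\<And>U. unitary_mat U \<Longrightarrow> \<bar>f U\<bar> \<le> B"
  shows "integrable M f"
proof -
  interpret prob_space M using haar_prob[OF h] .
  have "AE U in M. norm (f U) \<le> B" using haar_AE[OF h] by (auto elim!: AE_mp intro: b)
  then show ?thesis by (intro integrable_const_bound[OF _ haar_meas[OF h f]])
qed

definition permmat :: "('n \<Rightarrow> 'n) \<Rightarrow> complex^'n^'n" where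
  "permmat \<sigma> = (\<chi> i k. if k = \<sigma> i then 1 else 0)"

lemma ifm1: "(if P then 1 else 0) * (x::complex) = (if P then x else 0)" by simp
lemma ifm2: "(x::complex) * (if P then 1 else 0) = (if P then x else 0)" by simp

lemma permmat_mult: "(permmat \<sigma> ** U) $ i $ k = U $ (\<sigma> i) $ k"
  by (simp add: permmat_def matrix_matrix_mult_def ifm1)

lemma permmat_unitary:
  assumes inv: "\<And>x. \<sigma> (\<sigma> x) = x"
  shows "unitary_mat (permmat \<sigma>)"
proof -
  have s2: "complex_of_real (sqrt 2) * complex_of_real (sqrt 2) = 2"
    by (simp flip: of_real_mult)
  have A: "(conj_transpose (permmat \<sigma>) ** permmat \<sigma>) $ i $ j = mat 1 $ i $ j" for i j
  proof -
    have "(conj_transpose (permmat \<sigma>) ** permmat \<sigma>) $ i $ j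
       = (\<Sum>k\<in>UNIV. (if k = \<sigma> i then (if k = \<sigma> j then 1 else 0) else 0))"
      unfolding matrix_matrix_mult_def conj_transpose_def permmat_def
      apply (simp only: vec_lambda_beta)
      apply (rule sum.cong[OF refl])
      using inv by (smt (verit) complex_cnj_one complex_cnj_zero mult_cancel_left1 mult_cancel_right1)
    also have "... = (if i = j then 1 else 0)" using inv by simp metis
    finally show ?thesis by (simp add: mat_def)
  qed
  have B: "(permmat \<sigma> ** conj_transpose (permmat \<sigma>)) $ i $ j = mat 1 $ i $ j" for i j
  proof -
    have "(permmat \<sigma> ** conj_transpose (permmat \<sigma>)) $ i $ j
       = (\<Sum>k\<in>UNIV. (if k = \<sigma> i then (if k = \<sigma> j then 1 else 0) else 0))"
      unfolding matrix_matrix_mult_def conj_transpose_def permmat_def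
      apply (simp only: vec_lambda_beta)
      apply (rule sum.cong[OF refl])
      by simp
    also have "... = (if i = j then 1 else 0)" using inv by simp metis
    finally show ?thesis by (simp add: mat_def)
  qed
  show ?thesis unfolding unitary_mat_def using A B by (simp add: vec_eq_iff)
qed

definition sw :: "'a \<Rightarrow> 'a \<Rightarrow> 'a \<Rightarrow> 'a" where
  "sw a b x = (if x = a then b else if x = b then a else x)"

lemma sw_inv: "sw a b (sw a b x) = x"
  by (simp add: sw_def)

lemma sum_split2:
  fixes f :: "'n::finite \<Rightarrow> 'b::comm_monoid_add"
  assumes "a \<noteq> b"
  shows "sum f UNIV = f a + f b + sum f (UNIV - {a, b})"
proof -
  have "sum f UNIV = sum f {a,b} + sum f (UNIV - {a,b})"
    by (metis Diff_partition finite subset_UNIV sum.union_disjoint Diff_disjoint)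
  thus ?thesis using assms by simp
qed

definition rot :: "'n \<Rightarrow> 'n \<Rightarrow> complex \<Rightarrow> complex^'n^'n" where
  "rot a b z = (\<chi> i k. if i = a then (if k = a then complex_of_real (1/sqrt 2) else if k = b then z * complex_of_real (1/sqrt 2) else 0)
      else if i = b then (if k = a then complex_of_real (1/sqrt 2) else if k = b then - z * complex_of_real (1/sqrt 2) else 0)
      else (if k = i then 1 else 0))"

lemma rot_mult:
  assumes "a \<noteq> b"
  shows "(rot a b z ** U) $ a $ k = complex_of_real (1/sqrt 2) * (U$a$k + z * U$b$k)"
proof -
  have "(rot a b z ** U) $ a $ k = (\<Sum>j\<in>UNIV. rot a b z $ a $ j * U $ j $ k)"
    by (simp add: matrix_matrix_mult_def)
  also have "... = rot a b z $ a $ a * U $ a $ k + rot a b z $ a $ b * U $ b $ k"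
    using assms by (subst sum_split2[OF assms]) (simp add: rot_def)
  finally show ?thesis using assms by (simp add: rot_def algebra_simps)
qed

lemma rest_sum:
  fixes f :: "'n::finite \<Rightarrow> complex"
  assumes "\<And>k. k \<notin> S \<Longrightarrow> f k = (if k = i \<and> k = j then 1 else 0)"
  shows "(\<Sum>k\<in>UNIV - S. f k) = (if i = j \<and> i \<notin> S then 1 else 0)"
proof -
  have "(\<Sum>k\<in>UNIV - S. f k) = (\<Sum>k\<in>UNIV - S. if i = j then (if k = i then 1 else 0) else 0)"
    using assms by (intro sum.cong refl) auto
  also have "... = (if i = j \<and> i \<notin> S then 1 else 0)"
    by (cases "i = j") (simp_all add: sum.delta')
  finally show ?thesis .
qed

lemma rot_unitary:
  assumes ab: "a \<noteq> b" and z: "cmod z = 1"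
  shows "unitary_mat (rot a b z)"
proof -
  have zz: "z * cnj z = 1" "cnj z * z = 1" using z
    by (metis complex_norm_square mult.commute of_real_1 power_one)+
  define r where "r = complex_of_real (1/sqrt 2)"
  have r: "r * r = 1/2" "cnj r = r" unfolding r_def by (simp_all flip: of_real_mult)
  have s2: "complex_of_real (sqrt 2) * complex_of_real (sqrt 2) = 2"
    by (simp flip: of_real_mult)
  have A: "(conj_transpose (rot a b z) ** rot a b z) $ i $ j = mat 1 $ i $ j" for i j
  proof -
    have "(conj_transpose (rot a b z) ** rot a b z) $ i $ j = (\<Sum>k\<in>UNIV. cnj (rot a b z $ k $ i) * rot a b z $ k $ j)"
      by (simp add: matrix_matrix_mult_def conj_transpose_def)
    also have "... = cnj (rot a b z $ a $ i) * rot a b z $ a $ j + cnj (rot a b z $ b $ i) * rot a b z $ b $ j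
        + (if i = j \<and> i \<notin> {a,b} then 1 else 0)"
      by (subst sum_split2[OF ab], subst rest_sum) (auto simp: rot_def)
    also have "... = mat 1 $ i $ j"
      using ab by (auto simp: rot_def mat_def r_def[symmetric] r zz s2 algebra_simps)
    finally show ?thesis .
  qed
  have B: "(rot a b z ** conj_transpose (rot a b z)) $ i $ j = mat 1 $ i $ j" for i j
  proof -
    have "(rot a b z ** conj_transpose (rot a b z)) $ i $ j = (\<Sum>k\<in>UNIV. rot a b z $ i $ k * cnj (rot a b z $ j $ k))"
      by (simp add: matrix_matrix_mult_def conj_transpose_def)
    also have "... = rot a b z $ i $ a * cnj (rot a b z $ j $ a) + rot a b z $ i $ b * cnj (rot a b z $ j $ b)
        + (if i = j \<and> i \<notin> {a,b} then 1 else 0)"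
      by (subst sum_split2[OF ab], subst rest_sum) (auto simp: rot_def)
    also have "... = mat 1 $ i $ j"
      using ab by (auto simp: rot_def mat_def r_def[symmetric] r zz s2 algebra_simps)
    finally show ?thesis .
  qed
  show ?thesis using A B by (simp add: unitary_mat_def vec_eq_iff)
qed

definition Q :: "'n \<Rightarrow> 'n \<Rightarrow> 'n \<Rightarrow> 'n \<Rightarrow> complex^'n^'n \<Rightarrow> real" where
  "Q a b c d U = (cmod (U$a$c))^2 * (cmod (U$b$d))^2"
definition Er :: "'n \<Rightarrow> 'n \<Rightarrow> 'n \<Rightarrow> 'n \<Rightarrow> complex^'n^'n \<Rightarrow> real" where
  "Er a b c d U = Re (U$a$c * cnj (U$a$d) * cnj (U$b$c) * U$b$d)"
definition P1 :: "'n \<Rightarrow> 'n \<Rightarrow> complex^'n^'n \<Rightarrow> real" where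
  "P1 a c U = (cmod (U$a$c))^2"

lemma Q_cont: "continuous_on UNIV (Q a b c d)"
  unfolding Q_def by (intro continuous_intros)
lemma Er_cont: "continuous_on UNIV (Er a b c d)"
  unfolding Er_def by (intro continuous_intros)
lemma P1_cont: "continuous_on UNIV (P1 a c)"
  unfolding P1_def by (intro continuous_intros)

lemma Q_int: fixes M :: "(complex^'n^'n) measure" shows "haar_unitary M \<Longrightarrow> integrable M (Q a b c d)"
proof (rule haar_integrable[OF _ Q_cont, where B=1])
  fix U :: "complex^'n^'n" assume u: "unitary_mat U"
  have "(cmod (U$a$c))^2 \<le> 1" "(cmod (U$b$d))^2 \<le> 1"
    using unitary_entry_le[OF u] by (simp_all add: power_le_one)
  thus "\<bar>Q a b c d U\<bar> \<le> 1" unfolding Q_def by (simp add: mult_le_one)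
qed

lemma P1_int: fixes M :: "(complex^'n^'n) measure" shows "haar_unitary M \<Longrightarrow> integrable M (P1 a c)"
proof (rule haar_integrable[OF _ P1_cont, where B=1])
  fix U :: "complex^'n^'n" assume u: "unitary_mat U"
  show "\<bar>P1 a c U\<bar> \<le> 1" unfolding P1_def
    using unitary_entry_le[OF u] by (simp add: power_le_one)
qed

lemma Er_int: fixes M :: "(complex^'n^'n) measure" shows "haar_unitary M \<Longrightarrow> integrable M (Er a b c d)"
proof (rule haar_integrable[OF _ Er_cont, where B=1])
  fix U :: "complex^'n^'n" assume u: "unitary_mat U"
  have "\<bar>Er a b c d U\<bar> \<le> cmod (U$a$c * cnj (U$a$d) * cnj (U$b$c) * U$b$d)"
    unfolding Er_def by (rule abs_Re_le_cmod)
  also have "... = cmod (U$a$c) * cmod (U$a$d) * cmod (U$b$c) * cmod (U$b$d)"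
    by (simp add: norm_mult)
  also have "... \<le> 1" using unitary_entry_le[OF u]
    by (intro mult_le_one) (auto intro: mult_le_one)
  finally show "\<bar>Er a b c d U\<bar> \<le> 1" .
qed

lemma alg_id:
  fixes xa xb ya yb :: complex
  shows "(1/4) * ((cmod (xa + xb))^2 * (cmod (ya + yb))^2 + (cmod (xa + \<i>*xb))^2 * (cmod (ya + \<i>*yb))^2
     + (cmod (xa + (-1)*xb))^2 * (cmod (ya + (-1)*yb))^2 + (cmod (xa + (-\<i>)*xb))^2 * (cmod (ya + (-\<i>)*yb))^2)
   = (cmod xa)^2*(cmod ya)^2 + (cmod xb)^2*(cmod yb)^2 + (cmod xa)^2*(cmod yb)^2 + (cmod xb)^2*(cmod ya)^2
     + 2*Re(xa * cnj ya * cnj xb * yb)"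
  unfolding cmod_power2 by (simp add: algebra_simps power2_eq_square)

lemma rot_Q:
  assumes ab: "a \<noteq> b"
  shows "Q a a c d (rot a b z ** U) = (1/4) * ((cmod (U$a$c + z*U$b$c))^2 * (cmod (U$a$d + z*U$b$d))^2)"
proof -
  have r0: "cmod (complex_of_real (1/sqrt 2)) = 1/sqrt 2"
    by (simp only: norm_of_real) simp
  have r: "(cmod (complex_of_real (1/sqrt 2)))^2 = 1/2"
    unfolding r0 by (simp add: power_divide)
  show ?thesis unfolding Q_def rot_mult[OF ab] norm_mult power_mult_distrib r by simp
qed

lemma rot_rel:
  fixes M :: "(complex^'n^'n) measure"
  assumes h: "haar_unitary M" and ab: "a \<noteq> b"
  shows "4 * (\<integral>U. Q a a c d U \<partial>M) = (\<integral>U. Q a a c d U \<partial>M) + (\<integral>U. Q b b c d U \<partial>M)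
     + (\<integral>U. Q a b c d U \<partial>M) + (\<integral>U. Q b a c d U \<partial>M) + 2 * (\<integral>U. Er a b c d U \<partial>M)"
proof -
  define F where "F = Q a a c d"
  have eq: "(\<integral>U. F (rot a b z ** U) \<partial>M) = (\<integral>U. F U \<partial>M)" if "cmod z = 1" for z
    unfolding F_def by (rule haar_inv(1)[OF h rot_unitary[OF ab that] Q_cont])
  have int: "integrable M (\<lambda>U. F (rot a b z ** U))" if "cmod z = 1" for z
    unfolding F_def by (rule haar_inv(2)[OF h rot_unitary[OF ab that] Q_cont Q_int[OF h]])
  have pw: "F (rot a b 1 ** U) + F (rot a b \<i> ** U) + F (rot a b (-1) ** U) + F (rot a b (-\<i>) ** U)
     = Q a a c d U + Q b b c d U + Q a b c d U + Q b a c d U + 2 * Er a b c d U" for U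
  proof -
    have "F (rot a b 1 ** U) + F (rot a b \<i> ** U) + F (rot a b (-1) ** U) + F (rot a b (-\<i>) ** U)
      = (1/4) * ((cmod (U$a$c + 1*U$b$c))^2 * (cmod (U$a$d + 1*U$b$d))^2
        + (cmod (U$a$c + \<i>*U$b$c))^2 * (cmod (U$a$d + \<i>*U$b$d))^2
        + (cmod (U$a$c + (-1)*U$b$c))^2 * (cmod (U$a$d + (-1)*U$b$d))^2
        + (cmod (U$a$c + (-\<i>)*U$b$c))^2 * (cmod (U$a$d + (-\<i>)*U$b$d))^2)"
      unfolding F_def rot_Q[OF ab] by (simp only: distrib_left)
    also have "... = Q a a c d U + Q b b c d U + Q a b c d U + Q b a c d U + 2 * Er a b c d U"
      using alg_id[of "U$a$c" "U$b$c" "U$a$d" "U$b$d"] unfolding Q_def Er_def mult_1 by simp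
    finally show ?thesis .
  qed
  have c1: "cmod (1::complex) = 1" "cmod \<i> = 1" "cmod (-1::complex) = 1" "cmod (-\<i>) = 1" by simp_all
  note I = int[OF c1(1)] int[OF c1(2)] int[OF c1(3)] int[OF c1(4)]
  have "4 * (\<integral>U. F U \<partial>M) = (\<integral>U. F (rot a b 1 ** U) \<partial>M) + (\<integral>U. F (rot a b \<i> ** U) \<partial>M)
     + (\<integral>U. F (rot a b (-1) ** U) \<partial>M) + (\<integral>U. F (rot a b (-\<i>) ** U) \<partial>M)"
    using eq[OF c1(1)] eq[OF c1(2)] eq[OF c1(3)] eq[OF c1(4)] by simp
  also have "... = (\<integral>U. F (rot a b 1 ** U) + F (rot a b \<i> ** U) + F (rot a b (-1) ** U) + F (rot a b (-\<i>) ** U) \<partial>M)"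
    using I by simp
  also have "... = (\<integral>U. Q a a c d U + Q b b c d U + Q a b c d U + Q b a c d U + 2 * Er a b c d U \<partial>M)"
    unfolding pw ..
  also have "... = (\<integral>U. Q a a c d U \<partial>M) + (\<integral>U. Q b b c d U \<partial>M)
     + (\<integral>U. Q a b c d U \<partial>M) + (\<integral>U. Q b a c d U \<partial>M) + 2 * (\<integral>U. Er a b c d U \<partial>M)"
    using Q_int[OF h] Er_int[OF h] by simp
  finally show ?thesis unfolding F_def .
qed

lemma perm_Q:
  fixes M :: "(complex^'n^'n) measure"
  assumes h: "haar_unitary M" and inv: "\<And>x. \<sigma> (\<sigma> x) = x"
  shows "(\<integral>U. Q (\<sigma> a) (\<sigma> b) c d U \<partial>M) = (\<integral>U. Q a b c d U \<partial>M)"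
proof -
  have "(\<integral>U. Q a b c d U \<partial>M) = (\<integral>U. Q a b c d (permmat \<sigma> ** U) \<partial>M)"
    by (rule haar_inv(1)[OF h permmat_unitary[OF inv] Q_cont, symmetric])
  also have "... = (\<integral>U. Q (\<sigma> a) (\<sigma> b) c d U \<partial>M)"
    by (simp add: Q_def permmat_mult)
  finally show ?thesis by simp
qed

lemma perm_Er:
  fixes M :: "(complex^'n^'n) measure"
  assumes h: "haar_unitary M" and inv: "\<And>x. \<sigma> (\<sigma> x) = x"
  shows "(\<integral>U. Er (\<sigma> a) (\<sigma> b) c d U \<partial>M) = (\<integral>U. Er a b c d U \<partial>M)"
proof -
  have "(\<integral>U. Er a b c d U \<partial>M) = (\<integral>U. Er a b c d (permmat \<sigma> ** U) \<partial>M)"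
    by (rule haar_inv(1)[OF h permmat_unitary[OF inv] Er_cont, symmetric])
  also have "... = (\<integral>U. Er (\<sigma> a) (\<sigma> b) c d U \<partial>M)"
    by (simp add: Er_def permmat_mult)
  finally show ?thesis by simp
qed

lemma perm_P1:
  fixes M :: "(complex^'n^'n) measure"
  assumes h: "haar_unitary M" and inv: "\<And>x. \<sigma> (\<sigma> x) = x"
  shows "(\<integral>U. P1 (\<sigma> a) c U \<partial>M) = (\<integral>U. P1 a c U \<partial>M)"
proof -
  have "(\<integral>U. P1 a c U \<partial>M) = (\<integral>U. P1 a c (permmat \<sigma> ** U) \<partial>M)"
    by (rule haar_inv(1)[OF h permmat_unitary[OF inv] P1_cont, symmetric])
  also have "... = (\<integral>U. P1 (\<sigma> a) c U \<partial>M)"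
    by (simp add: P1_def permmat_mult)
  finally show ?thesis by simp
qed

lemma single_sym:
  assumes "\<And>\<sigma> a. (\<And>x. \<sigma> (\<sigma> x) = x) \<Longrightarrow> I (\<sigma> a) = (I a :: real)"
  shows "I a = I a'"
  using assms[of "sw a a'" a, OF sw_inv] by (simp add: sw_def)

lemma pair_sym:
  assumes S: "\<And>\<sigma> a b. (\<And>x. \<sigma> (\<sigma> x) = x) \<Longrightarrow> I (\<sigma> a) (\<sigma> b) = (I a b :: real)"
    and ab: "a \<noteq> b" and ab': "a' \<noteq> b'"
  shows "I a b = I a' b'"
proof -
  define b1 where "b1 = sw a a' b"
  have 1: "I a b = I a' b1" using S[of "sw a a'" a b, OF sw_inv] by (simp add: sw_def b1_def)
  have "b1 \<noteq> a'" using ab by (auto simp: b1_def sw_def)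
  hence 2: "I a' b1 = I a' b'" using S[of "sw b1 b'" a' b1, OF sw_inv] ab' by (simp add: sw_def)
  show ?thesis using 1 2 by simp
qed

lemma sum_except:
  fixes f :: "'n::finite \<Rightarrow> real"
  assumes "\<And>b. b \<noteq> a \<Longrightarrow> f b = y"
  shows "sum f UNIV = f a + (real CARD('n) - 1) * y"
proof -
  have "sum f UNIV = f a + sum f (UNIV - {a})"
    by (simp add: sum.remove)
  also have "sum f (UNIV - {a}) = (\<Sum>b\<in>UNIV - {a}. y)" using assms by (intro sum.cong) auto
  also have "... = real (CARD('n) - 1) * y" by (simp add: card_Diff_singleton)
  also have "real (CARD('n) - 1) = real CARD('n) - 1"
    using finite_UNIV_card_ge_0[where 'a='n] by (simp add: of_nat_diff)
  finally show ?thesis .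
qed

lemma haar_int_cong:
  fixes M :: "(complex^'n^'n) measure"
  assumes h: "haar_unitary M" and f: "continuous_on UNIV f" and g: "continuous_on UNIV g"
    and e: "\<And>U. unitary_mat U \<Longrightarrow> f U = (g U :: real)"
  shows "(\<integral>U. f U \<partial>M) = (\<integral>U. g U \<partial>M)"
  using haar_AE[OF h] by (intro integral_cong_AE haar_meas[OF h f] haar_meas[OF h g]) (auto elim!: AE_mp intro: e)

lemma P1_val:
  fixes M :: "(complex^'n^'n) measure"
  assumes h: "haar_unitary M"
  shows "(\<integral>U. P1 a c U \<partial>M) = 1 / real CARD('n)"
proof -
  interpret prob_space M using haar_prob[OF h] .
  have all: "(\<integral>U. P1 a' c U \<partial>M) = (\<integral>U. P1 a c U \<partial>M)" for a'
    by (rule single_sym[where I="\<lambda>a. \<integral>U. P1 a c U \<partial>M"]) (rule perm_P1[OF h])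
  have "(\<integral>U. (\<Sum>a'\<in>UNIV. P1 a' c U) \<partial>M) = (\<integral>U. 1 \<partial>M)"
    by (rule haar_int_cong[OF h]) (auto intro!: continuous_intros P1_cont simp: P1_def unitary_col_norm)
  also have "... = 1" by (simp add: prob_space)
  finally have s1: "(\<integral>U. (\<Sum>a'\<in>UNIV. P1 a' c U) \<partial>M) = 1" .
  have "(\<integral>U. (\<Sum>a'\<in>UNIV. P1 a' c U) \<partial>M) = (\<Sum>a'\<in>UNIV. (\<integral>U. P1 a' c U \<partial>M))"
    using P1_int[OF h] by simp
  with s1 have "(\<Sum>a'\<in>UNIV. (\<integral>U. P1 a' c U \<partial>M)) = 1" by simp
  moreover have "(\<Sum>a'\<in>UNIV. (\<integral>U. P1 a' c U \<partial>M)) = (\<Sum>a'\<in>(UNIV::'n set). (\<integral>U. P1 a c U \<partial>M))"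
    by (intro sum.cong refl all)
  ultimately have "real CARD('n) * (\<integral>U. P1 a c U \<partial>M) = 1" by simp
  thus ?thesis by (simp add: field_simps)
qed

lemma Q_pair:
  fixes M :: "(complex^'n^'n) measure"
  assumes h: "haar_unitary M" and "a \<noteq> b" "a' \<noteq> b'"
  shows "(\<integral>U. Q a b c d U \<partial>M) = (\<integral>U. Q a' b' c d U \<partial>M)"
  by (rule pair_sym[where I="\<lambda>a b. \<integral>U. Q a b c d U \<partial>M"]) (use perm_Q[OF h] assms in auto)

lemma Er_pair:
  fixes M :: "(complex^'n^'n) measure"
  assumes h: "haar_unitary M" and "a \<noteq> b" "a' \<noteq> b'"
  shows "(\<integral>U. Er a b c d U \<partial>M) = (\<integral>U. Er a' b' c d U \<partial>M)"
  by (rule pair_sym[where I="\<lambda>a b. \<integral>U. Er a b c d U \<partial>M"]) (use perm_Er[OF h] assms in auto)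

lemma Q_diag:
  fixes M :: "(complex^'n^'n) measure"
  assumes h: "haar_unitary M"
  shows "(\<integral>U. Q a a c d U \<partial>M) = (\<integral>U. Q a' a' c d U \<partial>M)"
  by (rule single_sym[where I="\<lambda>a. \<integral>U. Q a a c d U \<partial>M"]) (use perm_Q[OF h] in auto)

lemma norm_rel:
  fixes M :: "(complex^'n^'n) measure"
  assumes h: "haar_unitary M" and ab: "a \<noteq> b"
  shows "(\<integral>U. Q a a c d U \<partial>M) + (real CARD('n) - 1) * (\<integral>U. Q a b c d U \<partial>M) = 1 / real CARD('n)"
proof -
  have "(\<integral>U. (\<Sum>b'\<in>UNIV. Q a b' c d U) \<partial>M) = (\<integral>U. P1 a c U \<partial>M)"
  proof (rule haar_int_cong[OF h])
    show "continuous_on UNIV (\<lambda>U. \<Sum>b'\<in>UNIV. Q a b' c d U)" by (intro continuous_intros Q_cont)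
    show "continuous_on UNIV (P1 a c)" by (rule P1_cont)
    fix U :: "complex^'n^'n" assume "unitary_mat U"
    then show "(\<Sum>b'\<in>UNIV. Q a b' c d U) = P1 a c U"
      by (simp add: Q_def P1_def flip: sum_distrib_left add: unitary_col_norm)
  qed
  also have "... = 1 / real CARD('n)" by (rule P1_val[OF h])
  also have "(\<integral>U. (\<Sum>b'\<in>UNIV. Q a b' c d U) \<partial>M) = (\<Sum>b'\<in>UNIV. (\<integral>U. Q a b' c d U \<partial>M))"
    using Q_int[OF h] by simp
  also have "... = (\<integral>U. Q a a c d U \<partial>M) + (real CARD('n) - 1) * (\<integral>U. Q a b c d U \<partial>M)"
    by (rule sum_except) (use Q_pair[OF h _ ab] in auto)
  finally show ?thesis .
qed

lemma orth_pw:
  fixes U :: "complex^'n^'n"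
  assumes u: "unitary_mat U" and cd: "c \<noteq> d"
  shows "(\<Sum>a'\<in>UNIV. \<Sum>b'\<in>UNIV. Er a' b' c d U) = 0"
proof -
  define S where "S = (\<Sum>k\<in>UNIV. U$k$c * cnj (U$k$d))"
  have S0: "S = 0" unfolding S_def by (rule unitary_col_orth[OF u cd])
  have "(\<Sum>a'\<in>UNIV. \<Sum>b'\<in>UNIV. Er a' b' c d U) = Re (S * cnj S)"
    unfolding S_def cnj_sum sum_product Re_sum Er_def
    by (simp add: mult.assoc mult.left_commute)
  thus ?thesis by (simp add: S0)
qed

lemma Er_diag: "Er a a c d U = Q a a c d U"
proof -
  have "U$a$c * cnj (U$a$d) * cnj (U$a$c) * U$a$d = (U$a$c * cnj (U$a$c)) * (U$a$d * cnj (U$a$d))"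
    by (simp add: algebra_simps)
  also have "... = complex_of_real ((cmod (U$a$c))^2 * (cmod (U$a$d))^2)"
    by (simp only: complex_norm_square of_real_mult)
  finally show ?thesis unfolding Er_def Q_def by simp
qed

lemma orth_rel:
  fixes M :: "(complex^'n^'n) measure"
  assumes h: "haar_unitary M" and ab: "a \<noteq> b" and cd: "c \<noteq> d"
  shows "(\<integral>U. Q a a c d U \<partial>M) + (real CARD('n) - 1) * (\<integral>U. Er a b c d U \<partial>M) = 0"
proof -
  have "(\<integral>U. (\<Sum>a'\<in>UNIV. \<Sum>b'\<in>UNIV. Er a' b' c d U) \<partial>M) = (\<integral>U. 0 \<partial>M)"
    by (rule haar_int_cong[OF h]) (auto intro!: continuous_intros Er_cont simp: orth_pw[OF _ cd])
  hence "(\<Sum>a'\<in>UNIV. \<Sum>b'\<in>UNIV. (\<integral>U. Er a' b' c d U \<partial>M)) = 0"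
    using Er_int[OF h] by simp
  moreover have "(\<Sum>b'\<in>UNIV. (\<integral>U. Er a' b' c d U \<partial>M)) = (\<integral>U. Q a a c d U \<partial>M) + (real CARD('n) - 1) * (\<integral>U. Er a b c d U \<partial>M)" for a'
  proof -
    have "(\<Sum>b'\<in>UNIV. (\<integral>U. Er a' b' c d U \<partial>M)) = (\<integral>U. Er a' a' c d U \<partial>M) + (real CARD('n) - 1) * (\<integral>U. Er a b c d U \<partial>M)"
      by (rule sum_except) (use Er_pair[OF h _ ab] in auto)
    moreover have "(\<integral>U. Er a' a' c d U \<partial>M) = (\<integral>U. Q a' a' c d U \<partial>M)"
      using ext[of "Er a' a' c d" "Q a' a' c d", OF Er_diag] by simp
    ultimately show ?thesis using Q_diag[OF h, of a' c d a] by simp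
  qed
  ultimately have "real CARD('n) * ((\<integral>U. Q a a c d U \<partial>M) + (real CARD('n) - 1) * (\<integral>U. Er a b c d U \<partial>M)) = 0"
    by simp
  thus ?thesis by simp
qed

lemma Er_col: "Er a b c c U = Q a b c c U"
proof -
  have "U$a$c * cnj (U$a$c) * cnj (U$b$c) * U$b$c = (U$a$c * cnj (U$a$c)) * (U$b$c * cnj (U$b$c))"
    by (simp add: algebra_simps)
  also have "... = complex_of_real ((cmod (U$a$c))^2 * (cmod (U$b$c))^2)"
    by (simp only: complex_norm_square of_real_mult)
  finally show ?thesis unfolding Er_def Q_def by simp
qed

lemma card_ge2: "a \<noteq> (b::'n::finite) \<Longrightarrow> real CARD('n) \<ge> 2"
proof -
  assume "a \<noteq> b"
  hence "2 \<le> CARD('n)" using card_mono[of UNIV "{a,b}"] by simp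
  thus ?thesis by simp
qed

lemma solve_lin:
  fixes N x :: real
  assumes "(N + 1) * x = 1 / N" "N \<ge> 2"
  shows "x = 1 / (N * (N + 1))"
proof -
  have "N * ((N + 1) * x) = 1" using assms by simp
  moreover have "N * (N + 1) \<noteq> 0" using assms(2) by simp
  ultimately show ?thesis by (simp add: eq_divide_eq algebra_simps)
qed

lemma solve2:
  fixes N x :: real
  assumes "(N - 1) * x = 1 / (N + 1)" "N \<ge> 2"
  shows "x = 1 / ((N + 1) * (N - 1))"
proof -
  have "(N + 1) * ((N - 1) * x) = 1" using assms by simp
  moreover have "(N + 1) * (N - 1) \<noteq> 0" using assms(2) by simp
  ultimately show ?thesis by (simp add: eq_divide_eq algebra_simps)
qed

lemma vals:
  fixes M :: "(complex^'n^'n) measure"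
  assumes h: "haar_unitary M" and ab: "a \<noteq> b"
  shows "(\<integral>U. Q a a c d U \<partial>M) = (if c = d then 2 / (real CARD('n) * (real CARD('n) + 1)) else 1 / (real CARD('n) * (real CARD('n) + 1)))
    \<and> (\<integral>U. Q a b c d U \<partial>M) = (if c = d then 1 / (real CARD('n) * (real CARD('n) + 1)) else 1 / ((real CARD('n))\<^sup>2 - 1))"
proof -
  define N where "N = real CARD('n)"
  define g where "g = (\<integral>U. Q a a c d U \<partial>M)"
  define hh where "hh = (\<integral>U. Q a b c d U \<partial>M)"
  define e where "e = (\<integral>U. Er a b c d U \<partial>M)"
  have N2: "N \<ge> 2" unfolding N_def by (rule card_ge2[OF ab])
  have "N * N \<ge> 0" by simp
  hence NN: "N + N * N \<noteq> 0" using N2 by linarith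
  have R1: "g + (N - 1) * hh = 1 / N" unfolding g_def hh_def N_def by (rule norm_rel[OF h ab])
  have R2: "4 * g = g + g + hh + hh + 2 * e"
    using rot_rel[OF h ab, of c d] Q_diag[OF h, of b c d a] Q_pair[OF h, of b a a b c d] ab
    unfolding g_def hh_def e_def by simp
  show ?thesis
  proof (cases "c = d")
    case True
    have "e = hh" unfolding e_def hh_def True using ext[of "Er a b d d" "Q a b d d", OF Er_col] by simp
    with R2 have "g = 2 * hh" by simp
    with R1 have "(N + 1) * hh = 1 / N" by (simp add: algebra_simps)
    hence hv: "hh = 1 / (N * (N + 1))" using N2
      by (rule solve_lin)
    hence "g = 2 / (N * (N + 1))" using \<open>g = 2 * hh\<close> by simp
    thus ?thesis using hv True unfolding g_def hh_def N_def by simp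
  next
    case False
    have R3: "g + (N - 1) * e = 0" unfolding g_def e_def N_def by (rule orth_rel[OF h ab False])
    have ee: "e = g - hh" using R2 by simp
    have "N * g = (N - 1) * hh" using R3 unfolding ee by (simp add: algebra_simps)
    with R1 have "g + N * g = 1 / N" by simp
    hence "(N + 1) * g = 1 / N" by (simp add: algebra_simps)
    hence gv: "g = 1 / (N * (N + 1))" using N2
      by (rule solve_lin)
    have "(N - 1) * hh = N * g" using \<open>N * g = (N - 1) * hh\<close> by simp
    also have "... = 1 / (N + 1)" using gv N2 NN by (simp add: field_simps)
    finally have "hh = 1 / ((N + 1) * (N - 1))" using N2 by (rule solve2)
    also have "(N + 1) * (N - 1) = N\<^sup>2 - 1" by (simp add: algebra_simps power2_eq_square)
    finally show ?thesis using gv False unfolding g_def hh_def N_def by simp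
  qed
qed

definition momv :: "real \<Rightarrow> bool \<Rightarrow> bool \<Rightarrow> real" where
  "momv N p q = (if p then (if q then 2 / (N * (N + 1)) else 1 / (N * (N + 1)))
                 else (if q then 1 / (N * (N + 1)) else 1 / (N\<^sup>2 - 1)))"

lemma Q_val:
  fixes M :: "(complex^'n^'n) measure"
  assumes h: "haar_unitary M" and n2: "CARD('n) \<ge> 2"
  shows "(\<integral>U. Q r r' c c' U \<partial>M) = momv (real CARD('n)) (r = r') (c = c')"
proof (cases "r = r'")
  case True
  obtain b where b: "b \<noteq> r"
  proof -
    have "UNIV \<noteq> {r}" using n2 by (metis card.empty card_insert_disjoint empty_iff finite.emptyI numeral_le_one_iff semiring_norm(69) One_nat_def numeral_2_eq_2 not_less_eq_eq le_zero_eq)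
    then obtain b where "b \<noteq> r" by auto
    thus ?thesis using that by blast
  qed
  show ?thesis using vals[OF h b[symmetric], of c c'] True by (simp add: momv_def)
next
  case False
  show ?thesis using vals[OF h False, of c c'] False by (simp add: momv_def)
qed

lemma sum_bool2:
  fixes F :: "bool \<Rightarrow> bool \<Rightarrow> real"
  shows "(\<Sum>a'\<in>(UNIV::'a::finite set). \<Sum>b'\<in>(UNIV::'b::finite set). F (a = a') (b = b'))
    = F True True + (real CARD('b) - 1) * F True False + (real CARD('a) - 1) * (F False True + (real CARD('b) - 1) * F False False)"
proof -
  have inner: "(\<Sum>b'\<in>(UNIV::'b set). F x (b = b')) = F x True + (real CARD('b) - 1) * F x False" for x
  proof -
    have "(\<Sum>b'\<in>(UNIV::'b set). F x (b = b')) = F x (b = b) + (real CARD('b) - 1) * F x False"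
      by (rule sum_except[where f="\<lambda>b'. F x (b = b')" and a=b and y="F x False"]) auto
    thus ?thesis by simp
  qed
  have "(\<Sum>a'\<in>(UNIV::'a set). F (a = a') True + (real CARD('b) - 1) * F (a = a') False)
     = (F (a = a) True + (real CARD('b) - 1) * F (a = a) False) + (real CARD('a) - 1) * (F False True + (real CARD('b) - 1) * F False False)"
    by (rule sum_except[where f="\<lambda>a'. F (a = a') True + (real CARD('b) - 1) * F (a = a') False" and a=a
         and y="F False True + (real CARD('b) - 1) * F False False"]) auto
  thus ?thesis unfolding inner by simp
qed

lemma phi_eq: "(\<lambda>U::complex^('d \<times> 's::finite)^('d \<times> 's). phi_block U i j) = (\<lambda>U. (1 / real CARD('s)) * (\<Sum>a\<in>UNIV. \<Sum>b\<in>UNIV. P1 (i,a) (j,b) U))"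
  for i j :: "'d::finite"
  by (rule ext) (simp add: phi_block_def P1_def)

lemma phi_prod: "(\<lambda>U::complex^('d \<times> 's::finite)^('d \<times> 's). phi_block U i j * phi_block U i' j') = (\<lambda>U. (1 / real CARD('s))\<^sup>2 *
   (\<Sum>a\<in>UNIV. \<Sum>b\<in>UNIV. \<Sum>a'\<in>UNIV. \<Sum>b'\<in>UNIV. Q (i,a) (i',a') (j,b) (j',b') U))"
  for i j i' j' :: "'d::finite"
proof (rule ext)
  fix U :: "complex^('d \<times> 's::finite)^('d \<times> 's)"
  have "phi_block U i j * phi_block U i' j' = (1 / real CARD('s))\<^sup>2 *
     ((\<Sum>a\<in>UNIV. \<Sum>b\<in>UNIV. (cmod (U $ (i, a) $ (j, b)))\<^sup>2) * (\<Sum>a'\<in>UNIV. \<Sum>b'\<in>UNIV. (cmod (U $ (i', a') $ (j', b')))\<^sup>2))"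
    by (simp add: phi_block_def power2_eq_square)
  also have "(\<Sum>a\<in>UNIV. \<Sum>b\<in>UNIV. (cmod (U $ (i, a) $ (j, b)))\<^sup>2) * (\<Sum>a'\<in>UNIV. \<Sum>b'\<in>UNIV. (cmod (U $ (i', a') $ (j', b')))\<^sup>2)
     = (\<Sum>a\<in>UNIV. \<Sum>b\<in>UNIV. \<Sum>a'\<in>UNIV. \<Sum>b'\<in>UNIV. Q (i,a) (i',a') (j,b) (j',b') U)"
    by (simp only: sum_distrib_right) (simp only: sum_distrib_left Q_def)
  finally show "phi_block U i j * phi_block U i' j' = (1 / real CARD('s))\<^sup>2 *
     (\<Sum>a\<in>UNIV. \<Sum>b\<in>UNIV. \<Sum>a'\<in>UNIV. \<Sum>b'\<in>UNIV. Q (i,a) (i',a') (j,b) (j',b') U)" .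
qed

lemma cov_eq:
  assumes "prob_space M" "integrable M X" "integrable M Y" "integrable M (\<lambda>x. X x * Y x)"
  shows "covariance M X Y = (\<integral>x. X x * Y x \<partial>M) - (\<integral>x. X x \<partial>M) * (\<integral>x. Y x \<partial>M)"
proof -
  interpret prob_space M by fact
  define a where "a = (\<integral>x. X x \<partial>M)"
  define b where "b = (\<integral>x. Y x \<partial>M)"
  have "covariance M X Y = (\<integral>x. X x * Y x - b * X x - a * Y x + a * b \<partial>M)"
    unfolding covariance_def a_def[symmetric] b_def[symmetric]
    by (intro arg_cong[where f="integral\<^sup>L M"] ext) (simp add: algebra_simps)
  also have "... = (\<integral>x. X x * Y x \<partial>M) - b * a - a * b + a * b"
    using assms by (simp add: a_def b_def prob_space)
  finally show ?thesis unfolding a_def b_def by simp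
qed

lemma card_prod2: "CARD('a::finite \<times> 'b::finite) = CARD('a) * CARD('b)"
  by (simp only: UNIV_Times_UNIV[symmetric] card_cartesian_product)

context
  fixes M :: "(complex ^('d::finite \<times> 's::finite) ^('d \<times> 's)) measure"
  assumes h: "haar_unitary M" and d2: "CARD('d) \<ge> 2"
begin

lemma N2: "CARD('d \<times> 's) \<ge> 2"
proof -
  have "CARD('s) \<ge> 1" by (simp add: Suc_le_eq)
  hence "CARD('d) * CARD('s) \<ge> 2 * 1" using d2 by (intro mult_mono) auto
  thus ?thesis by (simp add: card_prod2)
qed

lemma phi_int: "integrable M (\<lambda>U. phi_block U i j)"
  unfolding phi_eq using P1_int[OF h] by simp

lemma phi_prod_int: "integrable M (\<lambda>U. phi_block U i j * phi_block U i' j')"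
  unfolding phi_prod using Q_int[OF h] by simp

lemma EX: "(\<integral>U. phi_block U i j \<partial>M) = real CARD('s) / real CARD('d \<times> 's)"
proof -
  have "(\<integral>U. phi_block U i j \<partial>M) = (1 / real CARD('s)) * (\<Sum>a\<in>(UNIV::'s set). \<Sum>b\<in>(UNIV::'s set). 1 / real CARD('d \<times> 's))"
    unfolding phi_eq using P1_int[OF h] by (simp add: P1_val[OF h])
  also have "... = real CARD('s) / real CARD('d \<times> 's)" by simp
  finally show ?thesis .
qed

lemma EXY: "(\<integral>U. phi_block U i j * phi_block U i' j' \<partial>M) =
   (let F = (\<lambda>x y. momv (real CARD('d \<times> 's)) (i = i' \<and> x) (j = j' \<and> y)) in
    F True True + (real CARD('s) - 1) * F True False + (real CARD('s) - 1) * (F False True + (real CARD('s) - 1) * F False False))"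
proof -
  define F where "F = (\<lambda>x y. momv (real CARD('d \<times> 's)) (i = i' \<and> x) (j = j' \<and> y))"
  define K where "K = F True True + (real CARD('s) - 1) * F True False + (real CARD('s) - 1) * (F False True + (real CARD('s) - 1) * F False False)"
  have inner: "(\<Sum>a'\<in>(UNIV::'s set). \<Sum>b'\<in>(UNIV::'s set). (\<integral>U. Q (i,a) (i',a') (j,b) (j',b') U \<partial>M)) = K" for a b
  proof -
    have "(\<Sum>a'\<in>(UNIV::'s set). \<Sum>b'\<in>(UNIV::'s set). (\<integral>U. Q (i,a) (i',a') (j,b) (j',b') U \<partial>M))
      = (\<Sum>a'\<in>(UNIV::'s set). \<Sum>b'\<in>(UNIV::'s set). F (a = a') (b = b'))"
      by (simp add: Q_val[OF h N2] F_def)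
    also have "... = K" unfolding K_def by (rule sum_bool2)
    finally show ?thesis .
  qed
  have "(\<integral>U. phi_block U i j * phi_block U i' j' \<partial>M) = (1 / real CARD('s))\<^sup>2 *
     (\<Sum>a\<in>(UNIV::'s set). \<Sum>b\<in>(UNIV::'s set). \<Sum>a'\<in>(UNIV::'s set). \<Sum>b'\<in>(UNIV::'s set). (\<integral>U. Q (i,a) (i',a') (j,b) (j',b') U \<partial>M))"
    unfolding phi_prod using Q_int[OF h] by simp
  also have "... = (1 / real CARD('s))\<^sup>2 * (\<Sum>a\<in>(UNIV::'s set). \<Sum>b\<in>(UNIV::'s set). K)"
    by (simp only: inner)
  also have "... = K" by (simp add: power2_eq_square)
  finally show ?thesis unfolding K_def F_def Let_def .
qed

end

lemma alg_all:
  fixes d S :: real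
  assumes d: "d \<ge> 2" and S: "S \<ge> 1"
  defines "N \<equiv> d * S"
  shows "2 / (N * (N + 1)) + (S - 1) * (1 / (N * (N + 1))) + (S - 1) * (1 / (N * (N + 1)) + (S - 1) * (1 / (N\<^sup>2 - 1))) - (S / N)\<^sup>2
          = (d - 1)\<^sup>2 / (d\<^sup>2 * (N\<^sup>2 - 1))"
    and "1 / (N * (N + 1)) + (S - 1) * (1 / (N\<^sup>2 - 1)) + (S - 1) * (1 / (N * (N + 1)) + (S - 1) * (1 / (N\<^sup>2 - 1))) - (S / N)\<^sup>2
          = - (d - 1) / (d\<^sup>2 * (N\<^sup>2 - 1))"
    and "1 / (N * (N + 1)) + (S - 1) * (1 / (N * (N + 1))) + (S - 1) * (1 / (N\<^sup>2 - 1) + (S - 1) * (1 / (N\<^sup>2 - 1))) - (S / N)\<^sup>2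
          = - (d - 1) / (d\<^sup>2 * (N\<^sup>2 - 1))"
    and "1 / (N\<^sup>2 - 1) + (S - 1) * (1 / (N\<^sup>2 - 1)) + (S - 1) * (1 / (N\<^sup>2 - 1) + (S - 1) * (1 / (N\<^sup>2 - 1))) - (S / N)\<^sup>2
          = 1 / (d\<^sup>2 * (N\<^sup>2 - 1))"
proof -
  have dS: "d * S \<ge> 2" using mult_mono[OF d S] d by simp
  have N2: "N \<ge> 2" using dS unfolding N_def .
  have "N\<^sup>2 \<ge> 2 * 2" unfolding power2_eq_square using mult_mono[OF N2 N2] N2 by simp
  hence nz: "N \<noteq> 0" "N * (N + 1) \<noteq> 0" "N\<^sup>2 - 1 \<noteq> 0" "d\<^sup>2 * (N\<^sup>2 - 1) \<noteq> 0" using N2 d by auto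
  define A where "A = 1 / (N * (N + 1))"
  define B where "B = 1 / (N\<^sup>2 - 1)"
  define C where "C = 1 / (d\<^sup>2 * (N\<^sup>2 - 1))"
  define iN where "iN = 1 / N"
  have hA: "A * (N * (N + 1)) = 1" unfolding A_def using nz by simp
  have hB: "B * (N\<^sup>2 - 1) = 1" unfolding B_def using nz by simp
  have hC: "C * (d\<^sup>2 * (N\<^sup>2 - 1)) = 1" unfolding C_def using nz by simp
  have hN: "iN * N = 1" unfolding iN_def using nz by simp
  have hd: "N = d * S" unfolding N_def ..
  have r1: "(d - 1)\<^sup>2 / (d\<^sup>2 * (N\<^sup>2 - 1)) = (d - 1)\<^sup>2 * C" "- (d - 1) / (d\<^sup>2 * (N\<^sup>2 - 1)) = - (d - 1) * C"
      "1 / (d\<^sup>2 * (N\<^sup>2 - 1)) = C" "S / N = S * iN"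
    unfolding C_def iN_def by simp_all
  have r2: "1 / (N * (N + 1)) = A" "2 / (N * (N + 1)) = 2 * A" "1 / (N\<^sup>2 - 1) = B"
    unfolding A_def B_def by simp_all
  note R = r1 r2
  show "2 / (N * (N + 1)) + (S - 1) * (1 / (N * (N + 1))) + (S - 1) * (1 / (N * (N + 1)) + (S - 1) * (1 / (N\<^sup>2 - 1))) - (S / N)\<^sup>2
          = (d - 1)\<^sup>2 / (d\<^sup>2 * (N\<^sup>2 - 1))"
    unfolding R using hA hB hC hN hd by algebra
  show "1 / (N * (N + 1)) + (S - 1) * (1 / (N\<^sup>2 - 1)) + (S - 1) * (1 / (N * (N + 1)) + (S - 1) * (1 / (N\<^sup>2 - 1))) - (S / N)\<^sup>2
          = - (d - 1) / (d\<^sup>2 * (N\<^sup>2 - 1))"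
    unfolding R using hA hB hC hN hd by algebra
  show "1 / (N * (N + 1)) + (S - 1) * (1 / (N * (N + 1))) + (S - 1) * (1 / (N\<^sup>2 - 1) + (S - 1) * (1 / (N\<^sup>2 - 1))) - (S / N)\<^sup>2
          = - (d - 1) / (d\<^sup>2 * (N\<^sup>2 - 1))"
    unfolding R using hA hB hC hN hd by algebra
  show "1 / (N\<^sup>2 - 1) + (S - 1) * (1 / (N\<^sup>2 - 1)) + (S - 1) * (1 / (N\<^sup>2 - 1) + (S - 1) * (1 / (N\<^sup>2 - 1))) - (S / N)\<^sup>2
          = 1 / (d\<^sup>2 * (N\<^sup>2 - 1))"
    unfolding R using hA hB hC hN hd by algebra
qed

theorem corollary5p5:
  fixes M :: "(complex ^('d::finite \<times> 's::finite) ^('d \<times> 's)) measure"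
    and i i' j j' :: 'd
  defines "d \<equiv> real CARD('d)" and "n \<equiv> real CARD('d \<times> 's)"
  assumes d2: "CARD('d) \<ge> 2"
    and haar: "haar_unitary M"
    and ii: "i \<noteq> i'" and jj: "j \<noteq> j'"
  shows "(variance M (\<lambda>U. phi_block U i j) = (d - 1)\<^sup>2 / (d\<^sup>2 * (n\<^sup>2 - 1))) \<and>
    (covariance M (\<lambda>U. phi_block U i j) (\<lambda>U. phi_block U i' j) = - (d - 1) / (d\<^sup>2 * (n\<^sup>2 - 1))) \<and>
    (covariance M (\<lambda>U. phi_block U i j) (\<lambda>U. phi_block U i j') = - (d - 1) / (d\<^sup>2 * (n\<^sup>2 - 1))) \<and>
    (pearson M (\<lambda>U. phi_block U i j) (\<lambda>U. phi_block U i' j) = - 1 / (d - 1)) \<and>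
    (pearson M (\<lambda>U. phi_block U i j) (\<lambda>U. phi_block U i j') = - 1 / (d - 1)) \<and>
    (covariance M (\<lambda>U. phi_block U i j) (\<lambda>U. phi_block U i' j') = 1 / (d\<^sup>2 * (n\<^sup>2 - 1))) \<and>
    (pearson M (\<lambda>U. phi_block U i j) (\<lambda>U. phi_block U i' j') = 1 / (d - 1)\<^sup>2)"
proof -
  define S where "S = real CARD('s)"
  have nd: "n = d * S" unfolding n_def d_def S_def by (simp add: card_prod2)
  have dge: "d \<ge> 2" unfolding d_def using d2 by simp
  have S1: "S \<ge> 1" unfolding S_def by (simp add: Suc_le_eq)
  have cov: "covariance M (\<lambda>U. phi_block U a b) (\<lambda>U. phi_block U a' b') =
     (let F = (\<lambda>x y. momv n (a = a' \<and> x) (b = b' \<and> y)) in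
      F True True + (S - 1) * F True False + (S - 1) * (F False True + (S - 1) * F False False)) - (S / n)\<^sup>2" for a b a' b'
    unfolding n_def S_def
    by (subst cov_eq[OF haar_prob[OF haar] phi_int[OF haar d2] phi_int[OF haar d2] phi_prod_int[OF haar d2]])
       (simp add: EXY[OF haar d2] EX[OF haar d2] power2_eq_square)
  note A = alg_all[OF dge S1, folded nd]
  have v: "variance M (\<lambda>U. phi_block U a b) = (d - 1)\<^sup>2 / (d\<^sup>2 * (n\<^sup>2 - 1))" for a b
    unfolding variance_def cov using A(1) by (simp add: momv_def Let_def)
  have c1: "covariance M (\<lambda>U. phi_block U i j) (\<lambda>U. phi_block U i' j) = - (d - 1) / (d\<^sup>2 * (n\<^sup>2 - 1))"
    unfolding cov using A(2) ii by (simp add: momv_def Let_def)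
  have c2: "covariance M (\<lambda>U. phi_block U i j) (\<lambda>U. phi_block U i j') = - (d - 1) / (d\<^sup>2 * (n\<^sup>2 - 1))"
    unfolding cov using A(3) jj by (simp add: momv_def Let_def)
  have c3: "covariance M (\<lambda>U. phi_block U i j) (\<lambda>U. phi_block U i' j') = 1 / (d\<^sup>2 * (n\<^sup>2 - 1))"
    unfolding cov using A(4) ii jj by (simp add: momv_def Let_def)
  have n2: "n \<ge> 2" using nd dge S1 mult_mono[OF dge S1] by simp
  have "n\<^sup>2 \<ge> 2 * 2" unfolding power2_eq_square using mult_mono[OF n2 n2] n2 by simp
  hence D: "d\<^sup>2 * (n\<^sup>2 - 1) > 0" using dge by simp
  define V where "V = (d - 1)\<^sup>2 / (d\<^sup>2 * (n\<^sup>2 - 1))"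
  have Vpos: "V > 0" unfolding V_def using D dge by simp
  have sq: "sqrt (variance M (\<lambda>U. phi_block U a b) * variance M (\<lambda>U. phi_block U a' b')) = V" for a b a' b'
    unfolding v V_def[symmetric] using Vpos by simp
  have p1: "- (d - 1) / (d\<^sup>2 * (n\<^sup>2 - 1)) / V = - 1 / (d - 1)"
  proof -
    define X where "X = d\<^sup>2 * (n\<^sup>2 - 1)"
    have X: "X \<noteq> 0" and d1: "d - 1 \<noteq> 0" using D dge unfolding X_def by auto
    define e where "e = d - 1"
    have "- e / X / (e\<^sup>2 / X) = - 1 / e"
      using X d1 unfolding e_def[symmetric] by (simp add: field_simps power2_eq_square)
    hence "- (d - 1) / X / ((d - 1)\<^sup>2 / X) = - 1 / (d - 1)" unfolding e_def .
    thus ?thesis unfolding V_def X_def .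
  qed
  have p3: "1 / (d\<^sup>2 * (n\<^sup>2 - 1)) / V = 1 / (d - 1)\<^sup>2"
    unfolding V_def using D dge by (simp add: field_simps power2_eq_square)
  show ?thesis
    unfolding pearson_def sq using v c1 c2 c3 p1 p3 by simp
qed


end
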